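(* Let $n,m,n_g,n_w,r$, $A\in\mathbb{R}^{n\times n}$, $S\in\mathbb{R}^{n\times n_g}$, $C\in\mathbb{R}^{m\times n}$, $D_\omega\in\mathbb{R}^{n\times n_w}$ be given, $n_z=n+rn_g$, $d_n=(r-1)n_g$, and define $$A_a=\begin{bmatrix} A & S & 0\\ 0 & 0 & I_{d_n}\\ 0&0&0\end{bmatrix},\quad D_a=\begin{bmatrix} D_\omega & 0\\ 0&0\\ 0 & I_{n_g}\end{bmatrix},\quad C_a=\begin{bmatrix} C & 0\end{bmatrix},\quad \bar C_a=\begin{bmatrix} I_n & 0 & 0\\ 0 & I_{n_g} & 0\end{bmatrix}.$$ Suppose there exist $P\in\mathbb{R}^{n_z\times n_z}$, $P\succ 0$, $R,Q\in\mathbb{R}^{n_z\times m}$ and a scalar $\bar\lambda>0$ such that $$\begin{bmatrix} X & -(P+RC_a)D_a & \bar C_a^\top\\ * & -\bar\lambda I & 0\\ * & * & -\bar\lambda I\end{bmatrix}\prec 0,\qquad X:=A_a^\top P+A_a^\top C_a^\top R^\top-C_a^\top Q^\top+PA_a+RC_aA_a-QC_a.$$ Let $E=P^{-1}R$, $K=P^{-1}Q$, $M=I+EC_a$, $N=MA_a-KC_a$, and $T_{e_d\omega_a}(s)=-\bar C_a(sI-N)^{-1}MD_a$ (the transfer matrix from $\omega_a$ to $e_d=\bar C_a e$ of the error dynamics $\dot e=Ne-MD_a\omega_a+[K\ -E]\nu_a$). Then $\|T_{e_d\omega_a}\|_\infty<\bar\lambda$.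
   Context: $*$ denotes the block that makes the matrix symmetric. The $H_\infty$-norm is $\|T\|_\infty=\sup_{\mu\in\mathbb{R}^+}\sigma_{\max}(T(i\mu))$. *)

theory Defs
  imports "Jordan_Normal_Form.Matrix" "Jordan_Normal_Form.Char_Poly"
    "Jordan_Normal_Form.Gauss_Jordan_Elimination" "Jordan_Normal_Form.Schur_Decomposition"
    "HOL-Library.Extended_Real"
begin

definition hcat :: "'a :: zero mat \<Rightarrow> 'a mat \<Rightarrow> 'a mat" where
  "hcat X Y = four_block_mat X Y (0\<^sub>m 0 (dim_col X)) (0\<^sub>m 0 (dim_col Y))"

definition block3 :: "'a :: zero mat \<Rightarrow> 'a mat \<Rightarrow> 'a mat \<Rightarrow> 'a mat \<Rightarrow> 'a mat \<Rightarrow> 'a mat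
    \<Rightarrow> 'a mat \<Rightarrow> 'a mat \<Rightarrow> 'a mat \<Rightarrow> 'a mat" where
  "block3 a b c d e f g h i = hcat a (hcat b c) @\<^sub>r hcat d (hcat e f) @\<^sub>r hcat g (hcat h i)"

(* matrix inverse (junk value 0 for singular matrices) *)
definition minv :: "'a :: field mat \<Rightarrow> 'a mat" where
  "minv M = (case mat_inverse M of Some B \<Rightarrow> B | None \<Rightarrow> 0\<^sub>m (dim_row M) (dim_col M))"

definition pos_def :: "real mat \<Rightarrow> nat \<Rightarrow> bool" where
  "pos_def P k \<longleftrightarrow> P \<in> carrier_mat k k \<and> transpose_mat P = P \<and>
     (\<forall>v \<in> carrier_vec k. v \<noteq> 0\<^sub>v k \<longrightarrow> v \<bullet> (P *\<^sub>v v) > 0)"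

definition neg_def :: "real mat \<Rightarrow> nat \<Rightarrow> bool" where
  "neg_def M k \<longleftrightarrow> M \<in> carrier_mat k k \<and> transpose_mat M = M \<and>
     (\<forall>v \<in> carrier_vec k. v \<noteq> 0\<^sub>v k \<longrightarrow> v \<bullet> (M *\<^sub>v v) < 0)"

(* largest singular value: square root of the largest eigenvalue of T^H T
   (0 if there are no eigenvalues, i.e. T has no columns) *)
definition sigma_max :: "complex mat \<Rightarrow> real" where
  "sigma_max T = sqrt (Max (insert 0 {Re l | l. eigenvalue (mat_adjoint T * T) l}))"

definition hinf_norm :: "(complex \<Rightarrow> complex mat) \<Rightarrow> ereal" where
  "hinf_norm G = (SUP \<mu> \<in> {0<..}. ereal (sigma_max (G (\<i> * complex_of_real \<mu>))))"

definition aug_A :: "nat \<Rightarrow> nat \<Rightarrow> nat \<Rightarrow> real mat \<Rightarrow> real mat \<Rightarrow> real mat" where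
  "aug_A n ng r A S = (let dn = (r - 1) * ng in
     block3 A S (0\<^sub>m n dn)
            (0\<^sub>m dn n) (0\<^sub>m dn ng) (1\<^sub>m dn)
            (0\<^sub>m ng n) (0\<^sub>m ng ng) (0\<^sub>m ng dn))"

definition aug_D :: "nat \<Rightarrow> nat \<Rightarrow> nat \<Rightarrow> nat \<Rightarrow> real mat \<Rightarrow> real mat" where
  "aug_D n ng nw r Dw = (let dn = (r - 1) * ng in
     hcat Dw (0\<^sub>m n ng) @\<^sub>r hcat (0\<^sub>m dn nw) (0\<^sub>m dn ng) @\<^sub>r hcat (0\<^sub>m ng nw) (1\<^sub>m ng))"

definition aug_C :: "nat \<Rightarrow> nat \<Rightarrow> nat \<Rightarrow> nat \<Rightarrow> real mat \<Rightarrow> real mat" where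
  "aug_C n m ng r C = hcat C (0\<^sub>m m (r * ng))"

definition aug_Cbar :: "nat \<Rightarrow> nat \<Rightarrow> nat \<Rightarrow> real mat" where
  "aug_Cbar n ng r = (let dn = (r - 1) * ng in
     hcat (1\<^sub>m n) (hcat (0\<^sub>m n ng) (0\<^sub>m n dn)) @\<^sub>r hcat (0\<^sub>m ng n) (hcat (1\<^sub>m ng) (0\<^sub>m ng dn)))"

end

theory Submission
  imports Defs "HOL-Analysis.Function_Topology"
begin

lemma coord_cont[continuous_intros]: "continuous_on S (\<lambda>x::nat\<Rightarrow>real. x i)"
  by (rule continuous_on_subset[OF continuous_on_product_coordinates]) simp

lemma negdef_unif:
  fixes L :: "nat \<Rightarrow> nat \<Rightarrow> real"
  assumes neg: "\<And>a. (\<Sum>i<k. (a i)^2) \<noteq> 0 \<Longrightarrow> (\<Sum>i<k. \<Sum>j<k. a i * L i j * a j) < 0"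
  shows "\<exists>\<delta>>0. \<forall>a. (\<Sum>i<k. \<Sum>j<k. a i * L i j * a j) \<le> - \<delta> * (\<Sum>i<k. (a i)^2)"
proof (cases "k = 0")
  case True then show ?thesis by (intro exI[of _ 1]) auto
next
  case False
  define q where "q = (\<lambda>a::nat\<Rightarrow>real. \<Sum>i<k. \<Sum>j<k. a i * L i j * a j)"
  define nn where "nn = (\<lambda>a::nat\<Rightarrow>real. \<Sum>i<k. (a i)^2)"
  define S where "S = (\<lambda>i::nat. if i < k then {-1..1::real} else {0})"
  define K where "K = PiE UNIV S \<inter> {a. nn a = 1}"
  have cq: "continuous_on UNIV q" unfolding q_def by (intro continuous_intros)
  have cn: "continuous_on UNIV nn" unfolding nn_def by (intro continuous_intros)
  have "compactin (product_topology (\<lambda>i. euclidean) UNIV) (PiE UNIV S)"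
    unfolding compactin_PiE S_def by auto
  hence c1: "compact (PiE UNIV S)"
    by (simp add: euclidean_product_topology compactin_euclidean_iff)
  have "closed {a. nn a = 1}" using cn by (intro closed_Collect_eq) (auto intro: continuous_intros)
  hence cK: "compact K" unfolding K_def using c1 compact_Int_closed by blast
  define e0 where "e0 = (\<lambda>i::nat. if i = 0 then 1::real else 0)"
  have "(\<Sum>i<k. (e0 i)^2) = (\<Sum>i<k. if i = 0 then 1 else 0)"
    unfolding e0_def by (intro sum.cong) auto
  also have "\<dots> = 1" using False by (simp add: sum.delta)
  finally have "nn e0 = 1" unfolding nn_def .
  hence "e0 \<in> K" using False unfolding K_def S_def PiE_def
    by (auto simp: extensional_def e0_def)
  hence Kne: "K \<noteq> {}" by auto
  obtain a0 where a0: "a0 \<in> K" and amax: "\<And>a. a \<in> K \<Longrightarrow> q a \<le> q a0"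
    using continuous_attains_sup[OF cK Kne continuous_on_subset[OF cq]] by auto
  have "nn a0 = 1" using a0 unfolding K_def by auto
  hence m: "q a0 < 0" using neg[of a0] unfolding q_def nn_def by auto
  have "\<exists>\<delta>>0. \<forall>a. q a \<le> - \<delta> * nn a"
  proof (intro exI[of _ "- q a0"] conjI allI)
    show "0 < - q a0" using m by simp
    fix a
    show "q a \<le> - (- q a0) * nn a"
    proof (cases "nn a = 0")
      case True
      hence "\<forall>i<k. a i = 0" unfolding nn_def
        by (simp add: sum_nonneg_eq_0_iff)
      hence "q a = 0" unfolding q_def by simp
      thus ?thesis using True by simp
    next
      case nz: False
      have npos: "nn a > 0" using nz unfolding nn_def
        by (metis (no_types, lifting) less_eq_real_def sum_nonneg zero_le_power2)
      define c where "c = sqrt (nn a)"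
      have cpos: "c > 0" using npos c_def by simp
      define b where "b = (\<lambda>i. if i < k then a i / c else 0)"
      have nb: "nn b = 1"
      proof -
        have "nn b = (\<Sum>i<k. (a i)^2 / c^2)" unfolding nn_def b_def
          by (intro sum.cong) (auto simp: power_divide)
        also have "\<dots> = nn a / c^2" unfolding nn_def by (simp add: sum_divide_distrib)
        also have "\<dots> = 1" using npos c_def by simp
        finally show ?thesis .
      qed
      have "\<forall>i<k. (b i)^2 \<le> 1"
      proof (intro allI impI)
        fix i assume "i < k"
        have "(b i)^2 \<le> nn b" unfolding nn_def
          using member_le_sum[of i "{..<k}" "\<lambda>i. (b i)^2"] \<open>i<k\<close> by auto
        thus "(b i)^2 \<le> 1" using nb by simp
      qed
      hence "\<forall>i<k. b i \<in> {-1..1}" by (auto simp: abs_square_le_1 abs_le_iff)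
      hence "b \<in> K" unfolding K_def S_def using nb by (auto simp: PiE_def extensional_def b_def)
      hence qb: "q b \<le> q a0" by (rule amax)
      have "q b = q a / c^2" unfolding q_def b_def
        by (simp add: sum_divide_distrib power2_eq_square)
      hence "q a = q b * c^2" using cpos by simp
      also have "\<dots> \<le> q a0 * c^2" using qb cpos by (intro mult_right_mono) auto
      also have "c^2 = nn a" using npos c_def by simp
      finally show ?thesis by simp
    qed
  qed
  thus ?thesis unfolding q_def nn_def .
qed

lemma cnorm_eq:
  fixes v :: "complex vec"
  assumes v: "v \<in> carrier_vec n"
  shows "conjugate v \<bullet> v = complex_of_real (\<Sum>i<n. (cmod (v $ i))^2)"
proof -
  have "conjugate v \<bullet> v = (\<Sum>i<n. cnj (v $ i) * v $ i)"
    using v unfolding scalar_prod_def by (auto simp: lessThan_atLeast0)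
  also have "\<dots> = (\<Sum>i<n. complex_of_real ((cmod (v $ i))^2))"
    by (intro sum.cong refl) (simp add: complex_eq_iff cmod_power2 power2_eq_square[symmetric])
  finally show ?thesis by simp
qed

lemma cnorm_re:
  fixes v :: "complex vec"
  assumes v: "v \<in> carrier_vec n"
  shows "Re (conjugate v \<bullet> v) = (\<Sum>i<n. (cmod (v $ i))^2)"
  using cnorm_eq[OF v] by simp

lemma cnorm_nonneg:
  fixes v :: "complex vec"
  assumes v: "v \<in> carrier_vec n"
  shows "Re (conjugate v \<bullet> v) \<ge> 0"
  unfolding cnorm_re[OF v] by (intro sum_nonneg) auto

lemma cnorm_zero:
  fixes v :: "complex vec"
  assumes v: "v \<in> carrier_vec n" and le: "Re (conjugate v \<bullet> v) \<le> 0"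
  shows "v = 0\<^sub>v n"
proof -
  have "(\<Sum>i<n. (cmod (v $ i))^2) = 0" using le cnorm_nonneg[OF v] cnorm_re[OF v] by simp
  hence "\<forall>i\<in>{..<n}. (cmod (v $ i))^2 = 0" by (subst (asm) sum_nonneg_eq_0_iff) auto
  thus ?thesis using v by (intro eq_vecI) auto
qed

lemma cnorm_pos:
  fixes v :: "complex vec"
  assumes v: "v \<in> carrier_vec n" and nz: "v \<noteq> 0\<^sub>v n"
  shows "Re (conjugate v \<bullet> v) > 0"
  using cnorm_zero[OF v] nz cnorm_nonneg[OF v] by force

lemma negdef_complex:
  assumes nd: "neg_def L k"
  shows "\<exists>\<delta>>0. \<forall>z \<in> carrier_vec k.
     Re (conjugate z \<bullet> (map_mat complex_of_real L *\<^sub>v z)) \<le> - \<delta> * Re (conjugate z \<bullet> z)"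
proof -
  have L: "L \<in> carrier_mat k k" and sym: "transpose_mat L = L"
    and neg: "\<And>v. v \<in> carrier_vec k \<Longrightarrow> v \<noteq> 0\<^sub>v k \<Longrightarrow> v \<bullet> (L *\<^sub>v v) < 0"
    using nd unfolding neg_def_def by auto
  have symE: "\<And>i j. i < k \<Longrightarrow> j < k \<Longrightarrow> L $$ (j, i) = L $$ (i, j)"
    using sym L by (metis carrier_matD index_transpose_mat(1))
  define q where "q = (\<lambda>a::nat\<Rightarrow>real. \<Sum>i<k. \<Sum>j<k. a i * L $$ (i,j) * a j)"
  have qv: "vec k a \<bullet> (L *\<^sub>v vec k a) = q a" for a
    using L unfolding q_def scalar_prod_def mult_mat_vec_def
    by (auto simp: lessThan_atLeast0 sum_distrib_left row_def mult.assoc intro!: sum.cong)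
  have "\<And>a. (\<Sum>i<k. (a i)^2) \<noteq> 0 \<Longrightarrow> q a < 0"
  proof -
    fix a :: "nat \<Rightarrow> real" assume "(\<Sum>i<k. (a i)^2) \<noteq> 0"
    hence "\<exists>i<k. a i \<noteq> 0"
    proof (rule contrapos_np)
      assume "\<not> (\<exists>i<k. a i \<noteq> 0)"
      thus "(\<Sum>i<k. (a i)^2) = 0" by (intro sum.neutral) auto
    qed
    then obtain i where i: "i < k" "a i \<noteq> 0" by auto
    have "vec k a \<noteq> 0\<^sub>v k"
    proof
      assume "vec k a = 0\<^sub>v k"
      hence "vec k a $ i = 0\<^sub>v k $ i" by simp
      thus False using i by simp
    qed
    thus "q a < 0" using neg[of "vec k a"] qv by auto
  qed
  from negdef_unif[of k "\<lambda>i j. L $$ (i,j)", OF this[unfolded q_def]]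
  obtain \<delta> where d: "\<delta> > 0" and dq: "\<And>a. q a \<le> - \<delta> * (\<Sum>i<k. (a i)^2)"
    unfolding q_def by auto
  show ?thesis
  proof (intro exI[of _ \<delta>] conjI ballI d)
    fix z :: "complex vec" assume z: "z \<in> carrier_vec k"
    define a where "a = (\<lambda>i. Re (z $ i))"
    define b where "b = (\<lambda>i. Im (z $ i))"
    have "Re (conjugate z \<bullet> (map_mat complex_of_real L *\<^sub>v z))
        = (\<Sum>i<k. \<Sum>j<k. L $$ (i,j) * (a i * a j + b i * b j))"
      using z L unfolding scalar_prod_def mult_mat_vec_def a_def b_def
      by (auto simp: lessThan_atLeast0 sum_distrib_left row_def algebra_simps intro!: sum.cong)
    also have "\<dots> = q a + q b" unfolding q_def
      by (simp add: algebra_simps sum.distrib)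
    also have "\<dots> \<le> - \<delta> * (\<Sum>i<k. (a i)^2) + - \<delta> * (\<Sum>i<k. (b i)^2)"
      using dq[of a] dq[of b] by simp
    also have "\<dots> = - \<delta> * (\<Sum>i<k. (a i)^2 + (b i)^2)"
      by (simp add: sum.distrib algebra_simps)
    also have "(\<Sum>i<k. (a i)^2 + (b i)^2) = Re (conjugate z \<bullet> z)"
      using z unfolding scalar_prod_def a_def b_def
      by (auto simp: lessThan_atLeast0 Re_sum power2_eq_square intro!: sum.cong)
    finally show "Re (conjugate z \<bullet> (map_mat complex_of_real L *\<^sub>v z)) \<le> - \<delta> * Re (conjugate z \<bullet> z)" .
  qed
qed

lemma minv_inv:
  fixes A :: "'a :: field mat"
  assumes A: "A \<in> carrier_mat n n"
    and inj: "\<And>v. v \<in> carrier_vec n \<Longrightarrow> A *\<^sub>v v = 0\<^sub>v n \<Longrightarrow> v = 0\<^sub>v n"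
  shows "A * minv A = 1\<^sub>m n \<and> minv A * A = 1\<^sub>m n \<and> minv A \<in> carrier_mat n n"
proof -
  have "det A \<noteq> 0" using det_0_iff_vec_prod_zero_field[OF A] inj by blast
  from det_non_zero_imp_unit[OF A this, of "()"]
  have U: "A \<in> Units (ring_mat TYPE('a) n ())" .
  have "mat_inverse A \<noteq> None" using mat_inverse(1)[OF A, where b="()"] U by blast
  then obtain B where B: "mat_inverse A = Some B" by auto
  show ?thesis using mat_inverse(2)[OF A B] B unfolding minv_def by simp
qed

lemma adjoint_form:
  fixes G :: "complex mat"
  assumes G: "G \<in> carrier_mat p q" and v: "v \<in> carrier_vec q" and u: "u \<in> carrier_vec p"
  shows "conjugate v \<bullet> (mat_adjoint G *\<^sub>v u) = conjugate (G *\<^sub>v v) \<bullet> u"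
proof -
  have "conjugate v \<bullet> (mat_adjoint G *\<^sub>v u) = (\<Sum>i<q. cnj (v $ i) * (\<Sum>j<p. cnj (G $$ (j,i)) * u $ j))"
    using G v u unfolding scalar_prod_def mult_mat_vec_def mat_adjoint_def
    by (auto simp: lessThan_atLeast0 row_def col_def mat_of_rows_def intro!: sum.cong)
  also have "\<dots> = (\<Sum>j<p. \<Sum>i<q. cnj (v $ i) * cnj (G $$ (j,i)) * u $ j)"
    by (simp add: sum_distrib_left mult.assoc sum.swap[of _ "{..<q}"])
  also have "\<dots> = (\<Sum>j<p. cnj (\<Sum>i<q. G $$ (j,i) * v $ i) * u $ j)"
    by (simp add: sum_distrib_right sum_distrib_left cnj_sum mult_ac)
  also have "\<dots> = conjugate (G *\<^sub>v v) \<bullet> u"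
    using G v u unfolding scalar_prod_def mult_mat_vec_def
    by (auto simp: lessThan_atLeast0 row_def intro!: sum.cong)
  finally show ?thesis .
qed

lemma sigma_bound:
  fixes G :: "complex mat"
  assumes G: "G \<in> carrier_mat p q" and g: "\<gamma> \<ge> 0"
    and bnd: "\<And>w. w \<in> carrier_vec q \<Longrightarrow>
       Re (conjugate (G *\<^sub>v w) \<bullet> (G *\<^sub>v w)) \<le> \<gamma>^2 * Re (conjugate w \<bullet> w)"
  shows "sigma_max G \<le> \<gamma>"
proof -
  define H where "H = mat_adjoint G * G"
  have adjc: "mat_adjoint G \<in> carrier_mat q p" using G unfolding mat_adjoint_def by auto
  have H: "H \<in> carrier_mat q q" unfolding H_def using G adjc by auto
  have fin: "finite {l. eigenvalue H l}"
  proof -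
    have "char_poly H \<noteq> 0" using degree_monic_char_poly[OF H] by auto
    hence "finite {l. poly (char_poly H) l = 0}" by (rule poly_roots_finite)
    thus ?thesis using eigenvalue_root_char_poly[OF H] by simp
  qed
  have ev: "Re l \<le> \<gamma>^2" if evl: "eigenvalue H l" for l
  proof -
    obtain v where v: "v \<in> carrier_vec q" "v \<noteq> 0\<^sub>v q" "H *\<^sub>v v = l \<cdot>\<^sub>v v"
      using evl H unfolding eigenvalue_def eigenvector_def by (auto simp: carrier_matD)
    have "conjugate v \<bullet> (H *\<^sub>v v) = conjugate (G *\<^sub>v v) \<bullet> (G *\<^sub>v v)"
      unfolding H_def using adjoint_form[OF G v(1) mult_mat_vec_carrier[OF G v(1)]] G adjc v by (auto simp: assoc_mult_mat_vec[of _ q p G p])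
    moreover have "conjugate v \<bullet> (H *\<^sub>v v) = l * (conjugate v \<bullet> v)"
      using v by simp
    ultimately have eq: "l * (conjugate v \<bullet> v) = conjugate (G *\<^sub>v v) \<bullet> (G *\<^sub>v v)" by simp
    define c where "c = Re (conjugate v \<bullet> v)"
    have cv: "conjugate v \<bullet> v = complex_of_real c" unfolding c_def using cnorm_eq[OF v(1)] by simp
    have cpos: "c > 0" unfolding c_def using cnorm_pos[OF v(1,2)] .
    have "Re l * c = Re (conjugate (G *\<^sub>v v) \<bullet> (G *\<^sub>v v))"
      using arg_cong[OF eq, of Re] cv by simp
    also have "\<dots> \<le> \<gamma>^2 * c" using bnd[OF v(1)] c_def by simp
    finally show ?thesis using cpos by simp
  qed
  have "Max (insert 0 {Re l | l. eigenvalue H l}) \<le> \<gamma>^2"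
  proof (rule Max.boundedI)
    show "finite (insert 0 {Re l | l. eigenvalue H l})"
      using fin by (simp add: Setcompr_eq_image)
  qed (use ev in auto)
  hence "sqrt (Max (insert 0 {Re l | l. eigenvalue H l})) \<le> sqrt (\<gamma>^2)" by (rule real_sqrt_le_mono)
  hence "sigma_max G \<le> sqrt (\<gamma>^2)" unfolding sigma_max_def H_def by simp
  thus ?thesis using g by simp
qed

lemma hinf_bound:
  assumes "\<And>\<mu>. \<mu> > 0 \<Longrightarrow> sigma_max (T (\<i> * complex_of_real \<mu>)) \<le> \<gamma>" and "\<gamma> < lam"
  shows "hinf_norm T < ereal lam"
proof -
  have "hinf_norm T \<le> ereal \<gamma>" unfolding hinf_norm_def
    by (rule SUP_least) (use assms in auto)
  also have "\<dots> < ereal lam" using assms by simp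
  finally show ?thesis .
qed

lemma hcat_carrier[simp,intro]: "X \<in> carrier_mat r c1 \<Longrightarrow> Y \<in> carrier_mat r c2 \<Longrightarrow> hcat X Y \<in> carrier_mat r (c1 + c2)"
  unfolding hcat_def by auto

lemma append_vec_nil: "v @\<^sub>v w = v" if "w \<in> carrier_vec 0"
  using that by (intro eq_vecI) auto

lemma hcat_mult:
  fixes X :: "'a :: comm_ring_1 mat"
  assumes X: "X \<in> carrier_mat r c1" and Y: "Y \<in> carrier_mat r c2"
    and u: "u \<in> carrier_vec c1" and v: "v \<in> carrier_vec c2"
  shows "hcat X Y *\<^sub>v (u @\<^sub>v v) = X *\<^sub>v u + Y *\<^sub>v v"
proof -
  have "hcat X Y *\<^sub>v (u @\<^sub>v v) = (X *\<^sub>v u + Y *\<^sub>v v) @\<^sub>v (0\<^sub>m 0 c1 *\<^sub>v u + 0\<^sub>m 0 c2 *\<^sub>v v)"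
    using X Y unfolding hcat_def by (simp only: carrier_matD) (rule four_block_mat_mult_vec[OF X Y zero_carrier_mat zero_carrier_mat u v])
  also have "\<dots> = X *\<^sub>v u + Y *\<^sub>v v" by (rule append_vec_nil) (rule add_carrier_vec; rule mult_mat_vec_carrier[of _ 0]; use u v in auto)
  finally show ?thesis .
qed

lemma append_rows_mult:
  fixes A :: "'a :: comm_ring_1 mat"
  assumes A: "A \<in> carrier_mat r1 c" and B: "B \<in> carrier_mat r2 c" and v: "v \<in> carrier_vec c"
  shows "(A @\<^sub>r B) *\<^sub>v v = (A *\<^sub>v v) @\<^sub>v (B *\<^sub>v v)"
  using A B v by (intro eq_vecI) (auto simp: append_rows_def scalar_prod_def row_def)

lemma block3_carrier:
  assumes "a \<in> carrier_mat ra ca" "b \<in> carrier_mat ra cb" "c \<in> carrier_mat ra cc"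
    "d \<in> carrier_mat rb ca" "e \<in> carrier_mat rb cb" "f \<in> carrier_mat rb cc"
    "g \<in> carrier_mat rc ca" "h \<in> carrier_mat rc cb" "i \<in> carrier_mat rc cc"
  shows "block3 a b c d e f g h i \<in> carrier_mat (ra + (rb + rc)) (ca + (cb + cc))"
  unfolding block3_def using assms by (intro carrier_append_rows hcat_carrier) auto

lemma block3_mult:
  fixes a :: "'a :: comm_ring_1 mat"
  assumes "a \<in> carrier_mat ra ca" "b \<in> carrier_mat ra cb" "c \<in> carrier_mat ra cc"
    "d \<in> carrier_mat rb ca" "e \<in> carrier_mat rb cb" "f \<in> carrier_mat rb cc"
    "g \<in> carrier_mat rc ca" "h \<in> carrier_mat rc cb" "i \<in> carrier_mat rc cc"
    and x: "x \<in> carrier_vec ca" and w: "w \<in> carrier_vec cb" and y: "y \<in> carrier_vec cc"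
  shows "block3 a b c d e f g h i *\<^sub>v (x @\<^sub>v w @\<^sub>v y) =
     (a *\<^sub>v x + (b *\<^sub>v w + c *\<^sub>v y)) @\<^sub>v (d *\<^sub>v x + (e *\<^sub>v w + f *\<^sub>v y)) @\<^sub>v (g *\<^sub>v x + (h *\<^sub>v w + i *\<^sub>v y))"
proof -
  have wy: "w @\<^sub>v y \<in> carrier_vec (cb + cc)" using w y by auto
  have xwy: "x @\<^sub>v w @\<^sub>v y \<in> carrier_vec (ca + (cb + cc))" using x wy by auto
  have h1: "hcat a (hcat b c) *\<^sub>v (x @\<^sub>v w @\<^sub>v y) = a *\<^sub>v x + (b *\<^sub>v w + c *\<^sub>v y)"
    using assms by (simp add: hcat_mult[of _ ra ca _ "cb+cc"] hcat_mult[of _ ra cb _ cc])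
  have h2: "hcat d (hcat e f) *\<^sub>v (x @\<^sub>v w @\<^sub>v y) = d *\<^sub>v x + (e *\<^sub>v w + f *\<^sub>v y)"
    using assms by (simp add: hcat_mult[of _ rb ca _ "cb+cc"] hcat_mult[of _ rb cb _ cc])
  have h3: "hcat g (hcat h i) *\<^sub>v (x @\<^sub>v w @\<^sub>v y) = g *\<^sub>v x + (h *\<^sub>v w + i *\<^sub>v y)"
    using assms by (simp add: hcat_mult[of _ rc ca _ "cb+cc"] hcat_mult[of _ rc cb _ cc])
  have C1: "hcat a (hcat b c) \<in> carrier_mat ra (ca + (cb + cc))" using assms by auto
  have C2: "hcat d (hcat e f) \<in> carrier_mat rb (ca + (cb + cc))" using assms by auto
  have C3: "hcat g (hcat h i) \<in> carrier_mat rc (ca + (cb + cc))" using assms by auto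
  show ?thesis unfolding block3_def
    using append_rows_mult[OF C1 carrier_append_rows[OF C2 C3] xwy]
      append_rows_mult[OF C2 C3 xwy] h1 h2 h3 by simp
qed

lemma map_hcat: "X \<in> carrier_mat r ca \<Longrightarrow> Y \<in> carrier_mat r cb \<Longrightarrow> map_mat f (hcat X Y) = hcat (map_mat f X) (map_mat f Y)"
  unfolding hcat_def by (intro eq_matI) auto

lemma map_append_rows: "A \<in> carrier_mat ra c \<Longrightarrow> B \<in> carrier_mat rb c \<Longrightarrow> map_mat f (A @\<^sub>r B) = map_mat f A @\<^sub>r map_mat f B"
  unfolding append_rows_def by (intro eq_matI) auto

lemma map_block3:
  assumes "a \<in> carrier_mat ra ca" "b \<in> carrier_mat ra cb" "c \<in> carrier_mat ra cc"
    "d \<in> carrier_mat rb ca" "e \<in> carrier_mat rb cb" "f \<in> carrier_mat rb cc"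
    "g \<in> carrier_mat rc ca" "h \<in> carrier_mat rc cb" "i \<in> carrier_mat rc cc"
  shows "map_mat F (block3 a b c d e f g h i) = block3 (map_mat F a) (map_mat F b) (map_mat F c)
     (map_mat F d) (map_mat F e) (map_mat F f) (map_mat F g) (map_mat F h) (map_mat F i)"
  unfolding block3_def using assms
  by (simp add: map_append_rows[of _ ra "ca+(cb+cc)" _ "rb+rc"] map_append_rows[of _ rb "ca+(cb+cc)" _ rc]
      map_hcat[of _ ra ca _ "cb+cc"] map_hcat[of _ ra cb _ cc]
      map_hcat[of _ rb ca _ "cb+cc"] map_hcat[of _ rb cb _ cc]
      map_hcat[of _ rc ca _ "cb+cc"] map_hcat[of _ rc cb _ cc] carrier_append_rows)

abbreviation cx :: "real mat \<Rightarrow> complex mat" where "cx \<equiv> map_mat complex_of_real"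

lemma cx_add: "A \<in> carrier_mat r c \<Longrightarrow> B \<in> carrier_mat r c \<Longrightarrow> cx (A + B) = cx A + cx B"
  by (intro eq_matI) auto
lemma cx_minus: "A \<in> carrier_mat r c \<Longrightarrow> B \<in> carrier_mat r c \<Longrightarrow> cx (A - B) = cx A - cx B"
  by (intro eq_matI) auto
lemma cx_uminus: "cx (- A) = - cx A"
  by (intro eq_matI) auto
lemma cx_smult: "cx (a \<cdot>\<^sub>m A) = complex_of_real a \<cdot>\<^sub>m cx A"
  by (intro eq_matI) auto
lemma cx_transpose: "cx (transpose_mat A) = transpose_mat (cx A)"
  by (intro eq_matI) auto
lemma cx_one: "cx (1\<^sub>m n) = 1\<^sub>m n"
  by (intro eq_matI) auto
lemma cx_zero: "cx (0\<^sub>m r c) = 0\<^sub>m r c"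
  by (intro eq_matI) auto
lemma cx_mult: "A \<in> carrier_mat r n \<Longrightarrow> B \<in> carrier_mat n c \<Longrightarrow> cx (A * B) = cx A * cx B"
  by (rule of_real_hom.mat_hom_mult)

lemma cx_conj: "A \<in> carrier_mat r c \<Longrightarrow> v \<in> carrier_vec c \<Longrightarrow> cx A *\<^sub>v conjugate v = conjugate (cx A *\<^sub>v v)"
  by (intro eq_vecI) (auto simp: scalar_prod_def cnj_sum)

lemma cx_transpose_form:
  assumes A: "A \<in> carrier_mat r c" and a: "a \<in> carrier_vec c" and b: "b \<in> carrier_vec r"
  shows "conjugate a \<bullet> (transpose_mat (cx A) *\<^sub>v b) = conjugate (cx A *\<^sub>v a) \<bullet> b"
proof -
  have cA: "cx A \<in> carrier_mat r c" using A by simp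
  have "conjugate a \<bullet> (transpose_mat (cx A) *\<^sub>v b) = (transpose_mat (cx A) *\<^sub>v b) \<bullet> conjugate a"
    using A a b by (intro comm_scalar_prod[of _ c]) auto
  also have "\<dots> = b \<bullet> (cx A *\<^sub>v conjugate a)"
    using transpose_vec_mult_scalar[OF cA _ b] a by simp
  also have "\<dots> = b \<bullet> conjugate (cx A *\<^sub>v a)" using cx_conj[OF A a] by simp
  also have "\<dots> = conjugate (cx A *\<^sub>v a) \<bullet> b"
    using A a b by (intro comm_scalar_prod[of _ r]) auto
  finally show ?thesis .
qed

lemma conj_append: "conjugate (a @\<^sub>v b) = conjugate a @\<^sub>v conjugate (b :: complex vec)"
  by (intro eq_vecI) auto

lemma re_sprod_sym:
  fixes a b :: "complex vec"
  assumes "a \<in> carrier_vec n" "b \<in> carrier_vec n"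
  shows "Re (conjugate a \<bullet> b) = Re (conjugate b \<bullet> a)"
  using assms unfolding scalar_prod_def by (auto simp: Re_sum mult.commute intro!: sum.cong)

lemma smult_one_mult_vec:
  fixes w :: "'a :: comm_ring_1 vec"
  assumes w: "w \<in> carrier_vec p"
  shows "(l \<cdot>\<^sub>m 1\<^sub>m p) *\<^sub>v w = l \<cdot>\<^sub>v w"
proof (rule eq_vecI)
  fix i assume "i < dim_vec (l \<cdot>\<^sub>v w)"
  hence i: "i < p" using w by simp
  have "row (l \<cdot>\<^sub>m 1\<^sub>m p) i \<bullet> w = (\<Sum>j\<in>{0..<p}. l * (if j = i then 1 else 0) * w $ j)"
    using w i by (auto simp: scalar_prod_def)
  also have "\<dots> = (\<Sum>j\<in>{0..<p}. (if i = j then l * w $ j else 0))"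
    by (rule sum.cong) auto
  also have "\<dots> = l * w $ i" using i by (simp add: sum.delta)
  finally show "((l \<cdot>\<^sub>m 1\<^sub>m p) *\<^sub>v w) $ i = (l \<cdot>\<^sub>v w) $ i" using i w by simp
qed (use w in simp)

lemma zero_mat_mult_vec: "y \<in> carrier_vec q \<Longrightarrow> (0\<^sub>m p q :: 'a :: comm_ring_1 mat) *\<^sub>v y = 0\<^sub>v p"
  by (intro eq_vecI) auto

lemma GEN:
  fixes P N Bm Cb :: "real mat" and lam :: real and s :: complex
  assumes P: "P \<in> carrier_mat nz nz" and Ps: "transpose_mat P = P"
    and N: "N \<in> carrier_mat nz nz" and Bm: "Bm \<in> carrier_mat nz p" and Cb: "Cb \<in> carrier_mat q nz"
    and x: "x \<in> carrier_vec nz" and w: "w \<in> carrier_vec p" and y: "y \<in> carrier_vec q"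
    and s: "cnj s = - s"
    and eq: "s \<cdot>\<^sub>v x = cx N *\<^sub>v x + cx Bm *\<^sub>v w"
  shows "Re (conjugate (x @\<^sub>v w @\<^sub>v y) \<bullet> (cx (block3 (transpose_mat N * P + P * N) (P * Bm) (transpose_mat Cb)
            (transpose_mat (P * Bm)) (- (lam \<cdot>\<^sub>m 1\<^sub>m p)) (0\<^sub>m p q) Cb (0\<^sub>m q p) (- (lam \<cdot>\<^sub>m 1\<^sub>m q))) *\<^sub>v (x @\<^sub>v w @\<^sub>v y)))
       = 2 * Re (conjugate (cx Cb *\<^sub>v x) \<bullet> y) - lam * (Re (conjugate w \<bullet> w) + Re (conjugate y \<bullet> y))"
proof -
  let ?P = "cx P" and ?N = "cx N" and ?B = "cx Bm" and ?C = "cx Cb" and ?l = "complex_of_real lam"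
  have cP: "?P \<in> carrier_mat nz nz" and cN: "?N \<in> carrier_mat nz nz" and cB: "?B \<in> carrier_mat nz p"
    and cC: "?C \<in> carrier_mat q nz" using P N Bm Cb by auto
  have cPs: "transpose_mat ?P = ?P" using Ps by (metis cx_transpose)
  have map: "cx (block3 (transpose_mat N * P + P * N) (P * Bm) (transpose_mat Cb)
            (transpose_mat (P * Bm)) (- (lam \<cdot>\<^sub>m 1\<^sub>m p)) (0\<^sub>m p q) Cb (0\<^sub>m q p) (- (lam \<cdot>\<^sub>m 1\<^sub>m q)))
      = block3 (transpose_mat ?N * ?P + ?P * ?N) (?P * ?B) (transpose_mat ?C)
            (transpose_mat ?B * ?P) (- (?l \<cdot>\<^sub>m 1\<^sub>m p)) (0\<^sub>m p q) ?C (0\<^sub>m q p) (- (?l \<cdot>\<^sub>m 1\<^sub>m q))"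
  proof -
    have "transpose_mat (P * Bm) = transpose_mat Bm * P" using P Bm Ps by (metis transpose_mult)
    thus ?thesis using P N Bm Cb
      by (subst map_block3[where ra=nz and ca=nz and cb=p and cc=q and rb=p and rc=q]) 
         (auto simp: cx_add[of _ nz nz] cx_mult[of _ nz nz] cx_mult[of _ _ nz] cx_mult[of _ p nz] cx_transpose cx_uminus cx_smult cx_one cx_zero)
  qed
  let ?L = "block3 (transpose_mat ?N * ?P + ?P * ?N) (?P * ?B) (transpose_mat ?C)
            (transpose_mat ?B * ?P) (- (?l \<cdot>\<^sub>m 1\<^sub>m p)) (0\<^sub>m p q) ?C (0\<^sub>m q p) (- (?l \<cdot>\<^sub>m 1\<^sub>m q))"
  have mult: "?L *\<^sub>v (x @\<^sub>v w @\<^sub>v y) =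
     ((transpose_mat ?N * ?P + ?P * ?N) *\<^sub>v x + (?P * ?B *\<^sub>v w + transpose_mat ?C *\<^sub>v y))
     @\<^sub>v (transpose_mat ?B * ?P *\<^sub>v x + (- (?l \<cdot>\<^sub>m 1\<^sub>m p) *\<^sub>v w + 0\<^sub>m p q *\<^sub>v y))
     @\<^sub>v (?C *\<^sub>v x + (0\<^sub>m q p *\<^sub>v w + - (?l \<cdot>\<^sub>m 1\<^sub>m q) *\<^sub>v y))"
    using cP cN cB cC x w y by (intro block3_mult[where ra=nz and ca=nz and cb=p and cc=q and rb=p and rc=q]) auto
  define h where "h = conjugate x \<bullet> (?P *\<^sub>v x)"
  have t1: "conjugate x \<bullet> ((transpose_mat ?N * ?P + ?P * ?N) *\<^sub>v x)
      = conjugate (?N *\<^sub>v x) \<bullet> (?P *\<^sub>v x) + conjugate x \<bullet> (?P *\<^sub>v (?N *\<^sub>v x))"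
  proof -
    have "(transpose_mat ?N * ?P + ?P * ?N) *\<^sub>v x = transpose_mat ?N *\<^sub>v (?P *\<^sub>v x) + ?P *\<^sub>v (?N *\<^sub>v x)"
      using cP cN x by (simp add: add_mult_distrib_mat_vec[of _ nz nz])
    hence "conjugate x \<bullet> ((transpose_mat ?N * ?P + ?P * ?N) *\<^sub>v x) =
       conjugate x \<bullet> (transpose_mat ?N *\<^sub>v (?P *\<^sub>v x)) + conjugate x \<bullet> (?P *\<^sub>v (?N *\<^sub>v x))"
      using cP cN x by (simp add: scalar_prod_add_distrib[of _ nz])
    thus ?thesis using cx_transpose_form[OF N x, of "?P *\<^sub>v x"] cP x by simp
  qed
  have t2: "conjugate x \<bullet> (?P * ?B *\<^sub>v w) = conjugate x \<bullet> (?P *\<^sub>v (?B *\<^sub>v w))"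
    using cP cB w by simp
  have t3: "conjugate w \<bullet> (transpose_mat ?B * ?P *\<^sub>v x) = conjugate (?B *\<^sub>v w) \<bullet> (?P *\<^sub>v x)"
  proof -
    have "transpose_mat ?B * ?P *\<^sub>v x = transpose_mat ?B *\<^sub>v (?P *\<^sub>v x)"
      using cB cP x by (simp add: assoc_mult_mat_vec[of _ p nz])
    thus ?thesis using cx_transpose_form[OF Bm w, of "?P *\<^sub>v x"] cP x by simp
  qed
  have t4: "conjugate x \<bullet> (transpose_mat ?C *\<^sub>v y) = conjugate (?C *\<^sub>v x) \<bullet> y"
    using cx_transpose_form[OF Cb x y] .
  have sx: "conjugate (s \<cdot>\<^sub>v x) \<bullet> (?P *\<^sub>v x) + conjugate x \<bullet> (?P *\<^sub>v (s \<cdot>\<^sub>v x)) = 0"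
  proof -
    have "conjugate (s \<cdot>\<^sub>v x) \<bullet> (?P *\<^sub>v x) = cnj s * h"
      unfolding h_def using cP x by (simp add: conjugate_smult_vec)
    moreover have "conjugate x \<bullet> (?P *\<^sub>v (s \<cdot>\<^sub>v x)) = s * h"
      unfolding h_def using cP x by (simp add: mult_mat_vec[OF cP x])
    ultimately show ?thesis using s by (simp add: algebra_simps)
  qed
  have A: "conjugate x \<bullet> ((transpose_mat ?N * ?P + ?P * ?N) *\<^sub>v x + (?P * ?B *\<^sub>v w + transpose_mat ?C *\<^sub>v y))
        + conjugate w \<bullet> (transpose_mat ?B * ?P *\<^sub>v x + (- (?l \<cdot>\<^sub>m 1\<^sub>m p) *\<^sub>v w + 0\<^sub>m p q *\<^sub>v y))
     = conjugate (?C *\<^sub>v x) \<bullet> y - ?l * (conjugate w \<bullet> w)"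
  proof -
    have v: "?N *\<^sub>v x \<in> carrier_vec nz" "?B *\<^sub>v w \<in> carrier_vec nz" "?P *\<^sub>v x \<in> carrier_vec nz"
      "?P *\<^sub>v (?N *\<^sub>v x) \<in> carrier_vec nz" "?P *\<^sub>v (?B *\<^sub>v w) \<in> carrier_vec nz"
      "transpose_mat ?C *\<^sub>v y \<in> carrier_vec nz" "(transpose_mat ?N * ?P + ?P * ?N) *\<^sub>v x \<in> carrier_vec nz"
      "transpose_mat ?B * ?P *\<^sub>v x \<in> carrier_vec p"
      using cP cN cB cC x w y by (auto intro!: mult_mat_vec_carrier mult_carrier_mat add_carrier_mat)
    have e1: "conjugate x \<bullet> ((transpose_mat ?N * ?P + ?P * ?N) *\<^sub>v x + (?P * ?B *\<^sub>v w + transpose_mat ?C *\<^sub>v y))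
       = conjugate x \<bullet> ((transpose_mat ?N * ?P + ?P * ?N) *\<^sub>v x) + (conjugate x \<bullet> (?P *\<^sub>v (?B *\<^sub>v w)) + conjugate x \<bullet> (transpose_mat ?C *\<^sub>v y))"
      using v x cP cB w unfolding t2[symmetric]
      by (simp add: scalar_prod_add_distrib[of _ nz])
    have e2: "conjugate w \<bullet> (transpose_mat ?B * ?P *\<^sub>v x + (- (?l \<cdot>\<^sub>m 1\<^sub>m p) *\<^sub>v w + 0\<^sub>m p q *\<^sub>v y))
       = conjugate w \<bullet> (transpose_mat ?B * ?P *\<^sub>v x) - ?l * (conjugate w \<bullet> w)"
    proof -
      have "- (?l \<cdot>\<^sub>m 1\<^sub>m p) *\<^sub>v w + 0\<^sub>m p q *\<^sub>v y = - (?l \<cdot>\<^sub>v w)"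
        using w y by (simp add: smult_one_mult_vec zero_mat_mult_vec right_zero_vec[of _ p])
      moreover have "conjugate w \<bullet> (transpose_mat ?B * ?P *\<^sub>v x + - (?l \<cdot>\<^sub>v w)) =
          conjugate w \<bullet> (transpose_mat ?B * ?P *\<^sub>v x) + conjugate w \<bullet> (- (?l \<cdot>\<^sub>v w))"
        using v w by (intro scalar_prod_add_distrib[of _ p]) auto
      moreover have "conjugate w \<bullet> (- (?l \<cdot>\<^sub>v w)) = - (?l * (conjugate w \<bullet> w))"
        using w by simp
      ultimately show ?thesis by simp
    qed
    have e3: "conjugate (?N *\<^sub>v x) \<bullet> (?P *\<^sub>v x) + conjugate (?B *\<^sub>v w) \<bullet> (?P *\<^sub>v x)
       = conjugate (s \<cdot>\<^sub>v x) \<bullet> (?P *\<^sub>v x)"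
      unfolding eq using v by (simp add: conjugate_add_vec add_scalar_prod_distrib[of _ nz])
    have e4: "conjugate x \<bullet> (?P *\<^sub>v (?N *\<^sub>v x)) + conjugate x \<bullet> (?P *\<^sub>v (?B *\<^sub>v w))
       = conjugate x \<bullet> (?P *\<^sub>v (s \<cdot>\<^sub>v x))"
      unfolding eq using v x cP by (simp add: mult_add_distrib_mat_vec[of _ nz nz] scalar_prod_add_distrib[of _ nz])
    show ?thesis unfolding e1 e2 t1 t3 t4 using sx e3 e4 by (simp add: algebra_simps)
  qed
  have B: "conjugate y \<bullet> (?C *\<^sub>v x + (0\<^sub>m q p *\<^sub>v w + - (?l \<cdot>\<^sub>m 1\<^sub>m q) *\<^sub>v y))
     = conjugate y \<bullet> (?C *\<^sub>v x) - ?l * (conjugate y \<bullet> y)"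
  proof -
    have "0\<^sub>m q p *\<^sub>v w + - (?l \<cdot>\<^sub>m 1\<^sub>m q) *\<^sub>v y = - (?l \<cdot>\<^sub>v y)"
      using w y by (simp add: smult_one_mult_vec zero_mat_mult_vec right_zero_vec[of _ p])
    moreover have "conjugate y \<bullet> (?C *\<^sub>v x + - (?l \<cdot>\<^sub>v y)) =
          conjugate y \<bullet> (?C *\<^sub>v x) + conjugate y \<bullet> (- (?l \<cdot>\<^sub>v y))"
      using cC x y by (intro scalar_prod_add_distrib[of _ q]) auto
    moreover have "conjugate y \<bullet> (- (?l \<cdot>\<^sub>v y)) = - (?l * (conjugate y \<bullet> y))"
      using y by simp
    ultimately show ?thesis by simp
  qed
  have "conjugate (x @\<^sub>v w @\<^sub>v y) \<bullet> (?L *\<^sub>v (x @\<^sub>v w @\<^sub>v y)) =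
      (conjugate x \<bullet> ((transpose_mat ?N * ?P + ?P * ?N) *\<^sub>v x + (?P * ?B *\<^sub>v w + transpose_mat ?C *\<^sub>v y))
        + conjugate w \<bullet> (transpose_mat ?B * ?P *\<^sub>v x + (- (?l \<cdot>\<^sub>m 1\<^sub>m p) *\<^sub>v w + 0\<^sub>m p q *\<^sub>v y)))
      + conjugate y \<bullet> (?C *\<^sub>v x + (0\<^sub>m q p *\<^sub>v w + - (?l \<cdot>\<^sub>m 1\<^sub>m q) *\<^sub>v y))"
  proof -
    let ?U1 = "(transpose_mat ?N * ?P + ?P * ?N) *\<^sub>v x + (?P * ?B *\<^sub>v w + transpose_mat ?C *\<^sub>v y)"
    let ?U2 = "transpose_mat ?B * ?P *\<^sub>v x + (- (?l \<cdot>\<^sub>m 1\<^sub>m p) *\<^sub>v w + 0\<^sub>m p q *\<^sub>v y)"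
    let ?U3 = "?C *\<^sub>v x + (0\<^sub>m q p *\<^sub>v w + - (?l \<cdot>\<^sub>m 1\<^sub>m q) *\<^sub>v y)"
    have U1: "?U1 \<in> carrier_vec nz" and U2: "?U2 \<in> carrier_vec p" and U3: "?U3 \<in> carrier_vec q"
      using cP cN cB cC x w y by (auto intro!: add_carrier_vec mult_mat_vec_carrier mult_carrier_mat smult_carrier_mat one_carrier_mat)
    have e2: "(conjugate w @\<^sub>v conjugate y) \<bullet> (?U2 @\<^sub>v ?U3) = conjugate w \<bullet> ?U2 + conjugate y \<bullet> ?U3"
      by (rule scalar_prod_append) (use U2 U3 w y in auto)
    have e1: "(conjugate x @\<^sub>v (conjugate w @\<^sub>v conjugate y)) \<bullet> (?U1 @\<^sub>v (?U2 @\<^sub>v ?U3))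
        = conjugate x \<bullet> ?U1 + (conjugate w @\<^sub>v conjugate y) \<bullet> (?U2 @\<^sub>v ?U3)"
      by (rule scalar_prod_append[of _ nz _ "p+q"]) (use U1 U2 U3 x w y in auto)
    show ?thesis unfolding mult conj_append e1 e2 by (simp add: add.assoc)
  qed
  also have "\<dots> = conjugate (?C *\<^sub>v x) \<bullet> y - ?l * (conjugate w \<bullet> w) + (conjugate y \<bullet> (?C *\<^sub>v x) - ?l * (conjugate y \<bullet> y))"
    unfolding A B ..
  finally have eqc: "conjugate (x @\<^sub>v w @\<^sub>v y) \<bullet> (?L *\<^sub>v (x @\<^sub>v w @\<^sub>v y)) = conjugate (?C *\<^sub>v x) \<bullet> y - ?l * (conjugate w \<bullet> w) + (conjugate y \<bullet> (?C *\<^sub>v x) - ?l * (conjugate y \<bullet> y))" .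
  have "Re (conjugate (x @\<^sub>v w @\<^sub>v y) \<bullet> (?L *\<^sub>v (x @\<^sub>v w @\<^sub>v y))) = 
     Re (conjugate (?C *\<^sub>v x) \<bullet> y) + Re (conjugate y \<bullet> (?C *\<^sub>v x)) - lam * (Re (conjugate w \<bullet> w) + Re (conjugate y \<bullet> y))"
    unfolding eqc by (simp add: algebra_simps)
  also have "Re (conjugate y \<bullet> (?C *\<^sub>v x)) = Re (conjugate (?C *\<^sub>v x) \<bullet> y)"
    using cC x y by (intro re_sprod_sym[of _ q]) auto
  finally show ?thesis unfolding map by simp
qed

lemma norm3:
  fixes x w y :: "complex vec"
  assumes x: "x \<in> carrier_vec a" and w: "w \<in> carrier_vec b" and y: "y \<in> carrier_vec c"
  shows "Re (conjugate (x @\<^sub>v w @\<^sub>v y) \<bullet> (x @\<^sub>v w @\<^sub>v y)) = Re (conjugate x \<bullet> x) + Re (conjugate w \<bullet> w) + Re (conjugate y \<bullet> y)"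
proof -
  have e2: "(conjugate w @\<^sub>v conjugate y) \<bullet> (w @\<^sub>v y) = conjugate w \<bullet> w + conjugate y \<bullet> y"
    by (rule scalar_prod_append) (use w y in auto)
  have e1: "(conjugate x @\<^sub>v (conjugate w @\<^sub>v conjugate y)) \<bullet> (x @\<^sub>v (w @\<^sub>v y))
     = conjugate x \<bullet> x + (conjugate w @\<^sub>v conjugate y) \<bullet> (w @\<^sub>v y)"
    by (rule scalar_prod_append[of _ a _ "b+c"]) (use x w y in auto)
  show ?thesis unfolding conj_append e1 e2 by simp
qed

lemma vec_eq_from_minus:
  fixes a b c :: "complex vec"
  assumes "a \<in> carrier_vec n" "b \<in> carrier_vec n" "c \<in> carrier_vec n" "a - b = c"
  shows "a = b + c"
proof (intro eq_vecI)
  fix i assume "i < dim_vec (b + c)"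
  hence i: "i < n" using assms by simp
  have h1: "(a - b) $ i = c $ i" by (subst assms(4)) (rule refl)
  have h2: "(a - b) $ i = a $ i - b $ i" using assms(1,2) i by simp
  have h3: "(b + c) $ i = b $ i + c $ i" using assms i by simp
  show "a $ i = (b + c) $ i" unfolding h3 using h1 h2 by (metis add.commute diff_add_cancel)
qed (use assms in simp)

theorem proposition2:
  fixes n m ng nw r :: nat
    and A S C Dw P R Q :: "real mat"
    and lam :: real
  assumes r: "r \<ge> 1"
    and A: "A \<in> carrier_mat n n" and S: "S \<in> carrier_mat n ng"
    and C: "C \<in> carrier_mat m n" and Dw: "Dw \<in> carrier_mat n nw"
    and P: "pos_def P (n + r * ng)"
    and R: "R \<in> carrier_mat (n + r * ng) m" and Q: "Q \<in> carrier_mat (n + r * ng) m"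
    and lam: "lam > 0"
    and LMI: "let nz = n + r * ng; Aa = aug_A n ng r A S; Da = aug_D n ng nw r Dw;
                  Ca = aug_C n m ng r C; Cb = aug_Cbar n ng r;
                  X = transpose_mat Aa * P + transpose_mat Aa * transpose_mat Ca * transpose_mat R
                      - transpose_mat Ca * transpose_mat Q + P * Aa + R * Ca * Aa - Q * Ca;
                  B12 = - ((P + R * Ca) * Da)
              in neg_def (block3 X B12 (transpose_mat Cb)
                                 (transpose_mat B12) (- (lam \<cdot>\<^sub>m 1\<^sub>m (nw + ng))) (0\<^sub>m (nw + ng) (n + ng))
                                 Cb (0\<^sub>m (n + ng) (nw + ng)) (- (lam \<cdot>\<^sub>m 1\<^sub>m (n + ng))))
                         (nz + (nw + ng) + (n + ng))"
  shows "let nz = n + r * ng; Aa = aug_A n ng r A S; Da = aug_D n ng nw r Dw;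
             Ca = aug_C n m ng r C; Cb = aug_Cbar n ng r;
             E = minv P * R; K = minv P * Q;
             M = 1\<^sub>m nz + E * Ca; N = M * Aa - K * Ca;
             cx = map_mat complex_of_real;
             T = (\<lambda>s. - (cx Cb * minv (s \<cdot>\<^sub>m 1\<^sub>m nz - cx N) * cx M * cx Da))
         in hinf_norm T < ereal lam"
proof -
  define nz where "nz = n + r * ng"
  define dn where "dn = (r - 1) * ng"
  have r1: "r * ng = ng + dn" using r unfolding dn_def by (cases r) auto
  have nzA: "n + (ng + dn) = nz" "n + (dn + ng) = nz" unfolding nz_def using r1 by auto
  define Aa where "Aa = aug_A n ng r A S"
  define Da where "Da = aug_D n ng nw r Dw"
  define Ca where "Ca = aug_C n m ng r C"
  define Cb where "Cb = aug_Cbar n ng r"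
  have Aa: "Aa \<in> carrier_mat nz nz"
  proof -
    have "Aa \<in> carrier_mat (n + (dn + ng)) (n + (ng + dn))"
      unfolding Aa_def aug_A_def Let_def dn_def[symmetric] using A S by (intro block3_carrier) auto
    thus ?thesis using nzA by simp
  qed
  have Da: "Da \<in> carrier_mat nz (nw + ng)"
  proof -
    have "Da \<in> carrier_mat (n + (dn + ng)) (nw + ng)"
      unfolding Da_def aug_D_def Let_def dn_def[symmetric] using Dw
      by (intro carrier_append_rows hcat_carrier) auto
    thus ?thesis using nzA by simp
  qed
  have Ca: "Ca \<in> carrier_mat m nz"
    unfolding Ca_def aug_C_def nz_def using C by (intro hcat_carrier) auto
  have Cb: "Cb \<in> carrier_mat (n + ng) nz"
  proof -
    have "Cb \<in> carrier_mat (n + ng) (n + (ng + dn))"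
      unfolding Cb_def aug_Cbar_def Let_def dn_def[symmetric]
      by (intro carrier_append_rows hcat_carrier) auto
    thus ?thesis using nzA by simp
  qed
  have Pc: "P \<in> carrier_mat nz nz" and Ps: "transpose_mat P = P"
    and Ppos: "\<And>v. v \<in> carrier_vec nz \<Longrightarrow> v \<noteq> 0\<^sub>v nz \<Longrightarrow> v \<bullet> (P *\<^sub>v v) > 0"
    using P unfolding pos_def_def nz_def by auto
  have Rc: "R \<in> carrier_mat nz m" and Qc: "Q \<in> carrier_mat nz m" using R Q nz_def by auto
  define Pi where "Pi = minv P"
  have PPi: "P * Pi = 1\<^sub>m nz" and PiP: "Pi * P = 1\<^sub>m nz" and Pic: "Pi \<in> carrier_mat nz nz"
  proof -
    have "P * minv P = 1\<^sub>m nz \<and> minv P * P = 1\<^sub>m nz \<and> minv P \<in> carrier_mat nz nz"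
    proof (rule minv_inv[OF Pc])
      fix v :: "real vec" assume v: "v \<in> carrier_vec nz" and "P *\<^sub>v v = 0\<^sub>v nz"
      hence "v \<bullet> (P *\<^sub>v v) = 0" by simp
      thus "v = 0\<^sub>v nz" using Ppos[OF v] by force
    qed
    thus "P * Pi = 1\<^sub>m nz" "Pi * P = 1\<^sub>m nz" "Pi \<in> carrier_mat nz nz" unfolding Pi_def by auto
  qed
  define E where "E = minv P * R"
  define K where "K = minv P * Q"
  define M where "M = 1\<^sub>m nz + E * Ca"
  define N where "N = M * Aa - K * Ca"
  define Bm where "Bm = - (M * Da)"
  have Ec: "E \<in> carrier_mat nz m" and Kc: "K \<in> carrier_mat nz m"
    unfolding E_def K_def Pi_def[symmetric] using Pic Rc Qc by auto
  have Mc: "M \<in> carrier_mat nz nz" unfolding M_def using Ec Ca by auto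
  have Nc: "N \<in> carrier_mat nz nz" unfolding N_def using Mc Aa Kc Ca by auto
  have Bmc: "Bm \<in> carrier_mat nz (nw + ng)" unfolding Bm_def using Mc Da by auto
  have PE: "P * E = R"
  proof -
    have "P * E = (P * Pi) * R" unfolding E_def Pi_def[symmetric] using Pc Pic Rc by (simp add: assoc_mult_mat[of P nz nz Pi nz R m])
    thus ?thesis using PPi Rc by simp
  qed
  have PK: "P * K = Q"
  proof -
    have "P * K = (P * Pi) * Q" unfolding K_def Pi_def[symmetric] using Pc Pic Qc by (simp add: assoc_mult_mat[of P nz nz Pi nz Q m])
    thus ?thesis using PPi Qc by simp
  qed
  have PM: "P * M = P + R * Ca"
  proof -
    have "P * M = P * 1\<^sub>m nz + P * (E * Ca)" unfolding M_def using Pc Ec Ca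
      by (intro mult_add_distrib_mat[of _ nz nz]) auto
    also have "P * (E * Ca) = (P * E) * Ca" using Pc Ec Ca by (simp add: assoc_mult_mat[of P nz nz E m Ca nz])
    finally show ?thesis using Pc PE by simp
  qed
  have PN: "P * N = P * Aa + R * Ca * Aa - Q * Ca"
  proof -
    have "P * N = P * (M * Aa) - P * (K * Ca)" unfolding N_def using Pc Mc Aa Kc Ca
      by (intro mult_minus_distrib_mat[of _ nz nz]) auto
    also have "P * (M * Aa) = (P * M) * Aa" using Pc Mc Aa by (simp add: assoc_mult_mat[of P nz nz M nz Aa nz])
    also have "P * (K * Ca) = (P * K) * Ca" using Pc Kc Ca by (simp add: assoc_mult_mat[of P nz nz K m Ca nz])
    also have "(P * M) * Aa = P * Aa + R * Ca * Aa" unfolding PM using Pc Rc Ca Aa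
      by (intro add_mult_distrib_mat[of _ nz nz]) auto
    finally show ?thesis unfolding PK .
  qed
  have eqX: "transpose_mat Aa * P + transpose_mat Aa * transpose_mat Ca * transpose_mat R
                      - transpose_mat Ca * transpose_mat Q + P * Aa + R * Ca * Aa - Q * Ca
           = transpose_mat N * P + P * N"
  proof -
    have "transpose_mat N * P = transpose_mat (P * N)" using transpose_mult[OF Pc Nc] Ps by simp
    also have "\<dots> = transpose_mat (P * Aa + R * Ca * Aa) - transpose_mat (Q * Ca)"
      unfolding PN using Pc Aa Rc Ca Qc by (intro transpose_minus[of _ nz nz]) auto
    also have "transpose_mat (P * Aa + R * Ca * Aa) = transpose_mat (P * Aa) + transpose_mat (R * Ca * Aa)"
      using Pc Aa Rc Ca by (intro transpose_add[of _ nz nz]) auto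
    also have "transpose_mat (P * Aa) = transpose_mat Aa * P" using transpose_mult[OF Pc Aa] Ps by simp
    also have "transpose_mat (R * Ca * Aa) = transpose_mat Aa * transpose_mat Ca * transpose_mat R"
    proof -
      have "transpose_mat (R * Ca * Aa) = transpose_mat Aa * transpose_mat (R * Ca)"
        using Rc Ca Aa by (intro transpose_mult[of _ nz nz]) auto
      also have "transpose_mat (R * Ca) = transpose_mat Ca * transpose_mat R"
        using Rc Ca by (intro transpose_mult[of _ nz m]) auto
      also have "transpose_mat Aa * (transpose_mat Ca * transpose_mat R) = transpose_mat Aa * transpose_mat Ca * transpose_mat R"
        using Rc Ca Aa by (intro assoc_mult_mat[symmetric, of _ nz nz _ m _ nz]) auto
      finally show ?thesis .
    qed
    also have "transpose_mat (Q * Ca) = transpose_mat Ca * transpose_mat Q"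
      using Qc Ca by (intro transpose_mult[of _ nz m]) auto
    finally have TN: "transpose_mat N * P = transpose_mat Aa * P + transpose_mat Aa * transpose_mat Ca * transpose_mat R
      - transpose_mat Ca * transpose_mat Q" .
    show ?thesis unfolding TN PN using Pc Aa Rc Ca Qc by (intro eq_matI) auto
  qed
  have eqB: "- ((P + R * Ca) * Da) = P * Bm"
  proof -
    have "P * Bm = - (P * (M * Da))" unfolding Bm_def using Pc Mc Da by (intro uminus_mult_right_mat) auto
    also have "P * (M * Da) = (P * M) * Da" using Pc Mc Da by (simp add: assoc_mult_mat[of P nz nz M nz Da])
    finally show ?thesis unfolding PM by simp
  qed
  define L where "L = block3 (transpose_mat N * P + P * N) (P * Bm) (transpose_mat Cb)
            (transpose_mat (P * Bm)) (- (lam \<cdot>\<^sub>m 1\<^sub>m (nw + ng))) (0\<^sub>m (nw + ng) (n + ng)) Cb (0\<^sub>m (n + ng) (nw + ng)) (- (lam \<cdot>\<^sub>m 1\<^sub>m (n + ng)))"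
  have ndL0: "neg_def (block3 (transpose_mat Aa * P + transpose_mat Aa * transpose_mat Ca * transpose_mat R
                      - transpose_mat Ca * transpose_mat Q + P * Aa + R * Ca * Aa - Q * Ca) (- ((P + R * Ca) * Da)) (transpose_mat Cb)
                                 (transpose_mat (- ((P + R * Ca) * Da))) (- (lam \<cdot>\<^sub>m 1\<^sub>m (nw + ng))) (0\<^sub>m (nw + ng) (n + ng))
                                 Cb (0\<^sub>m (n + ng) (nw + ng)) (- (lam \<cdot>\<^sub>m 1\<^sub>m (n + ng))))
                         (nz + (nw + ng) + (n + ng))"
    using LMI unfolding Let_def Aa_def Da_def Ca_def Cb_def nz_def .
  have ndL: "neg_def L (nz + (nw + ng) + (n + ng))"
    using ndL0 unfolding L_def eqX eqB .
  obtain \<delta> where d: "\<delta> > 0" and dL: "\<And>z. z \<in> carrier_vec (nz + (nw + ng) + (n + ng)) \<Longrightarrow>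
     Re (conjugate z \<bullet> (cx L *\<^sub>v z)) \<le> - \<delta> * Re (conjugate z \<bullet> z)"
    using negdef_complex[OF ndL] by blast
  define Tf where "Tf = (\<lambda>s. - (cx Cb * minv (s \<cdot>\<^sub>m 1\<^sub>m nz - cx N) * cx M * cx Da))"
  define d1 where "d1 = min \<delta> (lam / 2)"
  have d1: "0 < d1" "d1 \<le> \<delta>" "d1 < lam" unfolding d1_def using d lam by auto
  define \<gamma> where "\<gamma> = sqrt (lam * (lam - d1))"
  have g0: "\<gamma> \<ge> 0" unfolding \<gamma>_def using d1 lam by simp
  have g2: "\<gamma>^2 = lam * (lam - d1)" unfolding \<gamma>_def using d1 lam by simp
  have glam: "\<gamma> < lam"
  proof -
    have "lam * (lam - d1) < lam^2" using d1 lam by (simp add: power2_eq_square algebra_simps)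
    hence "\<gamma> < sqrt (lam^2)" unfolding \<gamma>_def by (intro real_sqrt_less_mono)
    thus ?thesis using lam by simp
  qed
  have cL: "cx L = cx (block3 (transpose_mat N * P + P * N) (P * Bm) (transpose_mat Cb)
            (transpose_mat (P * Bm)) (- (lam \<cdot>\<^sub>m 1\<^sub>m (nw + ng))) (0\<^sub>m (nw + ng) (n + ng)) Cb (0\<^sub>m (n + ng) (nw + ng)) (- (lam \<cdot>\<^sub>m 1\<^sub>m (n + ng))))"
    unfolding L_def ..
  have gen: "Re (conjugate (x @\<^sub>v w @\<^sub>v y) \<bullet> (cx L *\<^sub>v (x @\<^sub>v w @\<^sub>v y)))
       = 2 * Re (conjugate (cx Cb *\<^sub>v x) \<bullet> y) - lam * (Re (conjugate w \<bullet> w) + Re (conjugate y \<bullet> y))"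
    if "x \<in> carrier_vec nz" "w \<in> carrier_vec (nw + ng)" "y \<in> carrier_vec (n + ng)" "cnj s = - s"
       "s \<cdot>\<^sub>v x = cx N *\<^sub>v x + cx Bm *\<^sub>v w" for x w y s
    unfolding cL by (rule GEN[OF Pc Ps Nc Bmc Cb that])
  have dz: "Re (conjugate (x @\<^sub>v w @\<^sub>v y) \<bullet> (cx L *\<^sub>v (x @\<^sub>v w @\<^sub>v y)))
       \<le> - \<delta> * (Re (conjugate x \<bullet> x) + Re (conjugate w \<bullet> w) + Re (conjugate y \<bullet> y))"
    if "x \<in> carrier_vec nz" "w \<in> carrier_vec (nw + ng)" "y \<in> carrier_vec (n + ng)" for x w y
  proof -
    have "x @\<^sub>v w @\<^sub>v y \<in> carrier_vec (nz + ((nw + ng) + (n + ng)))"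
      using that by (intro append_carrier_vec) auto
    hence "x @\<^sub>v w @\<^sub>v y \<in> carrier_vec (nz + (nw + ng) + (n + ng))" by (simp only: add.assoc)
    from dL[OF this] show ?thesis unfolding norm3[OF that] .
  qed
  have pt: "sigma_max (Tf (\<i> * complex_of_real \<mu>)) \<le> \<gamma>" if mu: "\<mu> > 0" for \<mu>
  proof -
    define s where "s = \<i> * complex_of_real \<mu>"
    have s: "cnj s = - s" unfolding s_def by simp
    define Zm where "Zm = s \<cdot>\<^sub>m 1\<^sub>m nz - cx N"
    have Zc: "Zm \<in> carrier_mat nz nz" unfolding Zm_def using Nc by auto
    have Zx: "Zm *\<^sub>v x = s \<cdot>\<^sub>v x - cx N *\<^sub>v x" if "x \<in> carrier_vec nz" for x
      unfolding Zm_def using that Nc by (simp add: minus_mult_distrib_mat_vec[of _ nz nz] smult_one_mult_vec)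
    have Zinj: "x = 0\<^sub>v nz" if x: "x \<in> carrier_vec nz" and z0: "Zm *\<^sub>v x = 0\<^sub>v nz" for x
    proof -
      have "s \<cdot>\<^sub>v x - cx N *\<^sub>v x = 0\<^sub>v nz" using Zx[OF x] z0 by simp
      hence "s \<cdot>\<^sub>v x = cx N *\<^sub>v x + 0\<^sub>v nz"
        by (rule vec_eq_from_minus[rotated 3]) (use x Nc in auto)
      also have "0\<^sub>v nz = cx Bm *\<^sub>v 0\<^sub>v (nw + ng)" using Bmc by (intro eq_vecI) auto
      finally have eq: "s \<cdot>\<^sub>v x = cx N *\<^sub>v x + cx Bm *\<^sub>v 0\<^sub>v (nw + ng)" .
      have w0: "(0\<^sub>v (nw + ng) :: complex vec) \<in> carrier_vec (nw + ng)" and y0: "(0\<^sub>v (n + ng) :: complex vec) \<in> carrier_vec (n + ng)" by auto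
      have "Re (conjugate (x @\<^sub>v 0\<^sub>v (nw + ng) @\<^sub>v 0\<^sub>v (n + ng)) \<bullet> (cx L *\<^sub>v (x @\<^sub>v 0\<^sub>v (nw + ng) @\<^sub>v 0\<^sub>v (n + ng)))) = 0"
        using gen[OF x w0 y0 s eq] scalar_prod_right_zero[of "conjugate (cx Cb *\<^sub>v x)" "n + ng"] Cb x by simp
      with dz[OF x w0 y0] have "0 \<le> - \<delta> * Re (conjugate x \<bullet> x)" by simp
      hence "Re (conjugate x \<bullet> x) \<le> 0" using d by (simp add: mult_le_0_iff)
      thus ?thesis by (rule cnorm_zero[OF x])
    qed
    obtain Zi where ZZi: "Zm * Zi = 1\<^sub>m nz" and Zic: "Zi \<in> carrier_mat nz nz" and ZiDef: "minv Zm = Zi"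
      using minv_inv[OF Zc Zinj] by blast
    define G where "G = Tf s"
    have Gc: "G \<in> carrier_mat (n + ng) (nw + ng)"
      unfolding G_def Tf_def Zm_def[symmetric] ZiDef using Cb Zic Mc Da by auto
    have bnd: "Re (conjugate (G *\<^sub>v w) \<bullet> (G *\<^sub>v w)) \<le> \<gamma>^2 * Re (conjugate w \<bullet> w)"
      if w: "w \<in> carrier_vec (nw + ng)" for w
    proof -
      define u where "u = cx M *\<^sub>v (cx Da *\<^sub>v w)"
      have u: "u \<in> carrier_vec nz" unfolding u_def using Mc Da w by auto
      define x where "x = Zi *\<^sub>v (cx Bm *\<^sub>v w)"
      have x: "x \<in> carrier_vec nz" unfolding x_def using Zic Bmc w by auto
      have Bw: "cx Bm *\<^sub>v w = - u"
      proof -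
        have "cx Bm = - (cx M * cx Da)" unfolding Bm_def cx_uminus using cx_mult[OF Mc Da] by simp
        hence "cx Bm *\<^sub>v w = - ((cx M * cx Da) *\<^sub>v w)" using Mc Da w by simp
        thus ?thesis unfolding u_def using Mc Da w by simp
      qed
      have xu: "x = - (Zi *\<^sub>v u)" unfolding x_def Bw using Zic u by (intro eq_vecI) auto
      have Gw: "G *\<^sub>v w = cx Cb *\<^sub>v x"
      proof -
        have "G = - (cx Cb * Zi * cx M * cx Da)" unfolding G_def Tf_def Zm_def[symmetric] ZiDef ..
        hence "G *\<^sub>v w = - ((cx Cb * Zi * cx M * cx Da) *\<^sub>v w)" using Cb Zic Mc Da w by simp
        also have "(cx Cb * Zi * cx M * cx Da) *\<^sub>v w = cx Cb *\<^sub>v (Zi *\<^sub>v u)"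
        proof -
          have c1: "cx Cb * Zi * cx M \<in> carrier_mat (n + ng) nz" and c2: "cx Cb * Zi \<in> carrier_mat (n + ng) nz"
            and c3: "cx Da *\<^sub>v w \<in> carrier_vec nz" and c4: "cx M *\<^sub>v (cx Da *\<^sub>v w) \<in> carrier_vec nz"
            using Cb Zic Mc Da w by auto
          have "(cx Cb * Zi * cx M * cx Da) *\<^sub>v w = (cx Cb * Zi * cx M) *\<^sub>v (cx Da *\<^sub>v w)"
            by (rule assoc_mult_mat_vec[OF c1 _ w]) (use Da in simp)
          also have "\<dots> = (cx Cb * Zi) *\<^sub>v (cx M *\<^sub>v (cx Da *\<^sub>v w))"
            by (rule assoc_mult_mat_vec[OF c2 _ c3]) (use Mc in simp)
          also have "\<dots> = cx Cb *\<^sub>v (Zi *\<^sub>v (cx M *\<^sub>v (cx Da *\<^sub>v w)))"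
            by (rule assoc_mult_mat_vec[OF _ Zic c4]) (use Cb in simp)
          finally show ?thesis unfolding u_def .
        qed
        finally show ?thesis unfolding xu using Cb Zic u by (intro eq_vecI) auto
      qed
      have Zxx: "Zm *\<^sub>v x = cx Bm *\<^sub>v w"
        unfolding x_def using Zc Zic Bmc w ZZi by (simp add: assoc_mult_mat_vec[symmetric, of Zm nz nz Zi nz])
      have eq: "s \<cdot>\<^sub>v x = cx N *\<^sub>v x + cx Bm *\<^sub>v w"
        by (rule vec_eq_from_minus[of _ nz]) (use x Nc Bmc w Zx[OF x] Zxx in auto)
      define gx where "gx = cx Cb *\<^sub>v x"
      have gxc: "gx \<in> carrier_vec (n + ng)" unfolding gx_def using Cb x by auto
      define c where "c = complex_of_real (1 / lam)"
      define y where "y = c \<cdot>\<^sub>v gx"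
      have y: "y \<in> carrier_vec (n + ng)" unfolding y_def using gxc by auto
      define g where "g = Re (conjugate gx \<bullet> gx)"
      define W where "W = Re (conjugate w \<bullet> w)"
      have W0: "W \<ge> 0" unfolding W_def by (rule cnorm_nonneg[OF w])
      have X0: "Re (conjugate x \<bullet> x) \<ge> 0" by (rule cnorm_nonneg[OF x])
      have Y0: "Re (conjugate y \<bullet> y) \<ge> 0" by (rule cnorm_nonneg[OF y])
      have r1: "Re (conjugate gx \<bullet> y) = g / lam"
        unfolding y_def g_def c_def using gxc by simp
      have r2: "Re (conjugate y \<bullet> y) = g / lam^2"
        unfolding y_def g_def c_def using gxc by (simp add: conjugate_smult_vec power2_eq_square)
      have "2 * (g / lam) - lam * (W + g / lam^2) \<le> - \<delta> * (Re (conjugate x \<bullet> x) + W + Re (conjugate y \<bullet> y))"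
        using gen[OF x w y s eq] dz[OF x w y] unfolding gx_def[symmetric] r1 r2 W_def by simp
      also have "\<dots> \<le> - \<delta> * W" using d X0 Y0 by (simp add: mult_left_mono)
      finally have "2 * (g / lam) - lam * (W + g / lam^2) \<le> - \<delta> * W" .
      moreover have "lam * (g / lam^2) = g / lam" using lam by (simp add: power2_eq_square)
      ultimately have ineq: "2 * (g / lam) - (lam * W + g / lam) \<le> - \<delta> * W" by (simp add: distrib_left)
      have "g / lam \<le> (lam - \<delta>) * W" using ineq by (simp add: algebra_simps)
      hence "g \<le> lam * ((lam - \<delta>) * W)" using lam by (simp add: divide_le_eq mult.commute)
      also have "\<dots> \<le> lam * ((lam - d1) * W)" using lam d1 W0 by (intro mult_left_mono mult_right_mono) auto
      finally show ?thesis unfolding Gw g2 gx_def[symmetric] g_def[symmetric] W_def[symmetric] by (simp add: mult.assoc)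
    qed
    have "sigma_max G \<le> \<gamma>" by (rule sigma_bound[OF Gc g0 bnd])
    thus ?thesis unfolding G_def s_def .
  qed
  have main: "hinf_norm Tf < ereal lam"
    by (rule hinf_bound[where T=Tf, OF pt glam])
  show ?thesis
    unfolding Let_def nz_def[symmetric] Aa_def[symmetric] Da_def[symmetric] Ca_def[symmetric] Cb_def[symmetric]
      E_def[symmetric] K_def[symmetric] M_def[symmetric] N_def[symmetric] Tf_def[symmetric]
    by (rule main)
qed

end
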